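(* Let $f$ be smooth and bistable (there is $\alpha\in(0,1)$ with $f(0)=f(\alpha)=f(1)=0$, $f'(0),f'(1)<0<f'(\alpha)$, $f>0$ on $(-\infty,0)\cup(\alpha,1)$, $f<0$ on $(0,\alpha)\cup(1,\infty)$), $\tau_m=1/\sup_{[0,1]}|f'|$, $\delta_+=-f'(1)$, $\delta_-=-f'(0)$, $\chi_0=\tfrac12\min\{\delta_+,\delta_-\}$, and $\Omega=\{\lambda\in\mathbb{C}:\mathrm{Re}\,\lambda>-\chi_0\}$. For $\tau\in(0,\tau_m)$ let $c=c_\ast(\tau)$ be the speed of the traveling wave of $u_t=v_x+f(u)$, $\tau v_t=u_x-v$ connecting $(0,0)$ to $(1,0)$, $b_\pm=1+\tau\delta_\pm$, and $$\mathbf{A}^\tau_\pm(\lambda)=(1-c^2\tau)^{-1}\begin{pmatrix}0&1-c^2\tau\\ \tau\lambda^2+\lambda b_\pm+\delta_\pm& -c(b_\pm+2\tau\lambda)\end{pmatrix}.$$ Then for all $\tau\in(0,\tau_m)$ and all $\lambda\in\Omega$, the matrices $\mathbf{A}^\tau_\pm(\lambda)$ have no eigenvalues on the imaginary axis (no center eigenspace), and their stable and unstable eigenspaces $\mathbb{S}^\tau_\pm(\lambda)$, $\mathbb{U}^\tau_\pm(\lambda)$ satisfy $\dim\mathbb{S}^\tau_\pm(\lambda)=\dim\mathbb{U}^\tau_\pm(\lambda)=1$.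
   Context: It is known that $c_\ast(\tau)^2\tau<1$. The matrices $\mathbf{A}^\tau_\pm(\lambda)$ are the limits as $x\to\pm\infty$ of the coefficient matrix of the first-order form of the linearized eigenvalue problem around the wave. *)

theory Defs
  imports "HOL-Analysis.Analysis"
begin

definition smooth_fun :: "(real \<Rightarrow> real) \<Rightarrow> bool" where
  "smooth_fun f \<longleftrightarrow> (\<forall>n x. ((deriv ^^ n) f) differentiable (at x))"

definition bistable :: "(real \<Rightarrow> real) \<Rightarrow> bool" where
  "bistable f \<longleftrightarrow> (\<exists>\<alpha>. 0 < \<alpha> \<and> \<alpha> < 1 \<and> f 0 = 0 \<and> f \<alpha> = 0 \<and> f 1 = 0 \<and>
     deriv f 0 < 0 \<and> deriv f 1 < 0 \<and> 0 < deriv f \<alpha> \<and>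
     (\<forall>u. (u < 0 \<or> (\<alpha> < u \<and> u < 1)) \<longrightarrow> f u > 0) \<and>
     (\<forall>u. ((0 < u \<and> u < \<alpha>) \<or> 1 < u) \<longrightarrow> f u < 0))"

definition tau_m :: "(real \<Rightarrow> real) \<Rightarrow> real" where
  "tau_m f = 1 / (SUP x\<in>{0..1}. \<bar>deriv f x\<bar>)"

definition chi0 :: "(real \<Rightarrow> real) \<Rightarrow> real" where
  "chi0 f = min (- deriv f 1) (- deriv f 0) / 2"

text \<open>Traveling wave (u,v)(x,t) = (U,V)(x - c t) of u_t = v_x + f(u), tau v_t = u_x - v,
  with (U,V) -> (0,0) as xi -> -infinity and (U,V) -> (1,0) as xi -> +infinity.\<close>
definition traveling_wave ::
  "(real \<Rightarrow> real) \<Rightarrow> real \<Rightarrow> real \<Rightarrow> (real \<Rightarrow> real) \<Rightarrow> (real \<Rightarrow> real) \<Rightarrow> bool" where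
  "traveling_wave f \<tau> c U V \<longleftrightarrow>
     (\<forall>\<xi>. U differentiable (at \<xi>) \<and> V differentiable (at \<xi>) \<and>
          - c * deriv U \<xi> = deriv V \<xi> + f (U \<xi>) \<and>
          - \<tau> * c * deriv V \<xi> = deriv U \<xi> - V \<xi>) \<and>
     (U \<longlongrightarrow> 0) at_bot \<and> (V \<longlongrightarrow> 0) at_bot \<and>
     (U \<longlongrightarrow> 1) at_top \<and> (V \<longlongrightarrow> 0) at_top"

definition A_mat :: "real \<Rightarrow> real \<Rightarrow> real \<Rightarrow> complex \<Rightarrow> complex^2^2" where
  "A_mat \<tau> c \<delta> lam =
     (let t = complex_of_real \<tau>; cc = complex_of_real c; d = complex_of_real \<delta>;
          b = 1 + t * d; k = 1 / (1 - cc^2 * t) in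
      vector [vector [0, k * (1 - cc^2 * t)],
              vector [k * (t * lam^2 + lam * b + d), k * (- cc * (b + 2 * t * lam))]])"

definition mat_eigenvalue :: "complex^2^2 \<Rightarrow> complex \<Rightarrow> bool" where
  "mat_eigenvalue A \<mu> \<longleftrightarrow> (\<exists>v. v \<noteq> 0 \<and> A *v v = \<mu> *s v)"

definition gen_eigenspace :: "complex^2^2 \<Rightarrow> complex \<Rightarrow> (complex^2) set" where
  "gen_eigenspace A \<mu> = {v. \<exists>k. ((\<lambda>x. A *v x - \<mu> *s x) ^^ k) v = 0}"

definition stable_space :: "complex^2^2 \<Rightarrow> (complex^2) set" where
  "stable_space A = vec.span (\<Union>{gen_eigenspace A \<mu> | \<mu>. mat_eigenvalue A \<mu> \<and> Re \<mu> < 0})"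

definition unstable_space :: "complex^2^2 \<Rightarrow> (complex^2) set" where
  "unstable_space A = vec.span (\<Union>{gen_eigenspace A \<mu> | \<mu>. mat_eigenvalue A \<mu> \<and> Re \<mu> > 0})"

end

theory Submission
  imports Defs
begin



lemma Av2:
  fixes p q :: complex and w :: "complex^2"
  shows "(vector [vector [0, 1], vector [p, q]] :: complex^2^2) *v w = vector [w$2, p * w$1 + q * w$2]"
  by (simp add: vec_eq_iff forall_2 matrix_vector_mult_def sum_2)

lemma Bpow:
  fixes p q m1 m2 :: complex and w :: "complex^2"
  assumes "m1 + m2 = q" "m1 * m2 = - p"
  defines "A \<equiv> (vector [vector [0, 1], vector [p, q]] :: complex^2^2)"
  shows "((\<lambda>x. A *v x - m1 *s x) ^^ Suc k) w = ((m2 - m1)^k * (w$2 - m1 * w$1)) *s vector [1, m2]"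
proof -
  have qp: "q - m1 = m2" "p = - m1 * m2" using assms by (auto simp: algebra_simps)
  have B1: "A *v x - m1 *s x = (x$2 - m1 * x$1) *s vector [1, m2]" for x
    unfolding A_def Av2 using qp by (simp add: vec_eq_iff forall_2 algebra_simps)
  show ?thesis
  proof (induction k)
    case 0
    then show ?case using B1 by simp
  next
    case (Suc k)
    have "((\<lambda>x. A *v x - m1 *s x) ^^ Suc (Suc k)) w = (\<lambda>x. A *v x - m1 *s x) (((\<lambda>x. A *v x - m1 *s x) ^^ Suc k) w)"
      by (simp only: funpow.simps comp_def)
    also have "\<dots> = (\<lambda>x. A *v x - m1 *s x) (((m2 - m1)^k * (w$2 - m1 * w$1)) *s vector [1, m2])"
      by (simp only: Suc)
    also have "\<dots> = ((m2 - m1)^Suc k * (w$2 - m1 * w$1)) *s vector [1, m2]"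
      by (simp only: B1) (simp add: vec_eq_iff forall_2 algebra_simps)
    finally show ?case .
  qed
qed

lemma gen_eig:
  fixes p q m1 m2 :: complex
  assumes "m1 + m2 = q" "m1 * m2 = - p" "m1 \<noteq> m2"
  defines "A \<equiv> (vector [vector [0, 1], vector [p, q]] :: complex^2^2)"
  shows "gen_eigenspace A m1 = vec.span {vector [1, m1]}"
proof -
  have "w \<in> gen_eigenspace A m1 \<longleftrightarrow> w$2 = m1 * w$1" for w :: "complex^2"
  proof
    assume "w \<in> gen_eigenspace A m1"
    then obtain k where k: "((\<lambda>x. A *v x - m1 *s x) ^^ k) w = 0" by (auto simp: gen_eigenspace_def)
    show "w$2 = m1 * w$1"
    proof (cases k)
      case 0 then show ?thesis using k by simp
    next
      case (Suc j)
      then have "((m2 - m1)^j * (w$2 - m1 * w$1)) *s (vector [1, m2] :: complex^2) = 0"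
        using k Bpow[OF assms(1,2), of j w] unfolding A_def by simp
      then have "((m2 - m1)^j * (w$2 - m1 * w$1)) = 0"
        by (metis (no_types, lifting) mult_cancel_left1 vector_2(1) vector_smult_component zero_index mult_zero_right)
      then show ?thesis using assms(3) by simp
    qed
  next
    assume "w$2 = m1 * w$1"
    then have "((\<lambda>x. A *v x - m1 *s x) ^^ Suc 0) w = 0"
      using Bpow[OF assms(1,2), of 0 w] unfolding A_def by simp
    then show "w \<in> gen_eigenspace A m1" unfolding gen_eigenspace_def by blast
  qed
  moreover have "w \<in> vec.span {vector [1, m1]} \<longleftrightarrow> w$2 = m1 * w$1" for w :: "complex^2"
  proof
    assume "w \<in> vec.span {vector [1, m1]}"
    then obtain k where "w = k *s vector [1, m1]" by (auto simp: vec.span_singleton)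
    then show "w$2 = m1 * w$1" by simp
  next
    assume h: "w$2 = m1 * w$1"
    have "w = (w$1) *s vector [1, m1]" using h by (simp add: vec_eq_iff forall_2)
    then show "w \<in> vec.span {vector [1, m1]}" by (auto simp: vec.span_singleton)
  qed
  ultimately show ?thesis by blast
qed

lemma eig_iff:
  fixes p q m1 m2 :: complex
  assumes "m1 + m2 = q" "m1 * m2 = - p"
  defines "A \<equiv> (vector [vector [0, 1], vector [p, q]] :: complex^2^2)"
  shows "mat_eigenvalue A mu \<longleftrightarrow> mu = m1 \<or> mu = m2"
proof -
  have key: "mu*mu - q*mu - p = (mu - m1) * (mu - m2)"
    using assms(1,2) by (simp add: algebra_simps flip: assms(1))
  show ?thesis
  proof
    assume "mat_eigenvalue A mu"
    then obtain v where v: "v \<noteq> 0" "A *v v = mu *s v" by (auto simp: mat_eigenvalue_def)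
    then have e1: "v$2 = mu * v$1" and e2: "p * v$1 + q * v$2 = mu * v$2"
      unfolding A_def Av2 by (auto simp: vec_eq_iff forall_2)
    have "v$1 \<noteq> 0" using v(1) e1 by (auto simp: vec_eq_iff forall_2)
    moreover have "(mu*mu - q*mu - p) * v$1 = 0" using e1 e2 by (simp add: algebra_simps)
    ultimately show "mu = m1 \<or> mu = m2" using key by simp
  next
    assume h: "mu = m1 \<or> mu = m2"
    then have "mu*mu - q*mu - p = 0" using key by auto
    then have "A *v vector [1, mu] = mu *s vector [1, mu]"
      unfolding A_def Av2 by (simp add: vec_eq_iff forall_2 algebra_simps)
    moreover have "(vector [1, mu] :: complex^2) \<noteq> 0" by (metis vector_2(1) zero_index one_neq_zero)
    ultimately show "mat_eigenvalue A mu" unfolding mat_eigenvalue_def by blast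
  qed
qed

lemma dims:
  fixes p q m1 m2 :: complex
  assumes "m1 + m2 = q" "m1 * m2 = - p" "Re m1 < 0" "Re m2 > 0"
  defines "A \<equiv> (vector [vector [0, 1], vector [p, q]] :: complex^2^2)"
  shows "(\<forall>\<mu>. mat_eigenvalue A \<mu> \<longrightarrow> Re \<mu> \<noteq> 0) \<and> vec.dim (stable_space A) = 1 \<and> vec.dim (unstable_space A) = 1"
proof -
  have ne: "m1 \<noteq> m2" "m2 \<noteq> m1" using assms by auto
  have E: "mat_eigenvalue A mu \<longleftrightarrow> mu = m1 \<or> mu = m2" for mu using eig_iff[OF assms(1,2)] A_def by simp
  have n1: "(vector [1, m1] :: complex^2) \<noteq> 0" "(vector [1, m2] :: complex^2) \<noteq> 0"
    by (metis vector_2(1) zero_index one_neq_zero)+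
  have s: "{gen_eigenspace A \<mu> | \<mu>. mat_eigenvalue A \<mu> \<and> Re \<mu> < 0} = {gen_eigenspace A m1}"
    using E assms(3,4) by auto
  have u: "{gen_eigenspace A \<mu> | \<mu>. mat_eigenvalue A \<mu> \<and> Re \<mu> > 0} = {gen_eigenspace A m2}"
    using E assms(3,4) by auto
  have g1: "gen_eigenspace A m1 = vec.span {vector [1, m1]}" using gen_eig[OF assms(1,2) ne(1)] A_def by simp
  have g2: "gen_eigenspace A m2 = vec.span {vector [1, m2]}"
    using gen_eig[of m2 m1 q p] assms(1,2) ne(2) A_def by (simp add: add.commute mult.commute)
  show ?thesis
    unfolding stable_space_def unstable_space_def s u g1 g2
    using E assms(3,4) n1 by (auto simp: vec.span_span vec.dim_span)
qed



lemma noimag: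
  fixes \<tau> c \<delta> :: real and lam mu :: complex
  assumes eq: "of_real (1 - c^2*\<tau>) * mu^2 + of_real c * (of_real (1+\<tau>*\<delta>) + 2 * of_real \<tau> * lam) * mu
              - (of_real \<tau> * lam^2 + of_real (1+\<tau>*\<delta>) * lam + of_real \<delta>) = 0"
    and "Re mu = 0" "0 < \<tau>" "0 < \<delta>" "\<tau>*\<delta> < 2" "Re lam > - \<delta>/2"
  shows False
proof -
  define b where "b = 1 + \<tau>*\<delta>"
  define w where "w = lam - of_real c * mu"
  have e2: "mu^2 = of_real \<tau> * w^2 + of_real b * w + of_real \<delta>"
    using eq unfolding w_def b_def by (simp add: algebra_simps power2_eq_square)
  define y where "y = Im mu"
  have muy: "mu = Complex 0 y" using assms(2) unfolding y_def by (simp add: complex_eq_iff)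
  define x where "x = Re lam"
  define z where "z = Im lam - c * y"
  have wxz: "w = Complex x z" unfolding w_def x_def z_def muy by (simp add: complex_eq_iff)
  have "Complex (-(y^2)) 0 = of_real \<tau> * (Complex x z)^2 + of_real b * Complex x z + of_real \<delta>"
    using e2 unfolding muy wxz by (simp add: power2_eq_square complex_eq_iff)
  then have R: "-(y^2) = \<tau>*(x^2 - z^2) + b*x + \<delta>" and I: "0 = 2*\<tau>*x*z + b*z"
    by (simp_all add: complex_eq_iff power2_eq_square algebra_simps)
  have xg: "x > -\<delta>/2" using assms(6) x_def by simp
  have "z = 0 \<or> 2*\<tau>*x + b = 0" using I by (metis distrib_right mult.commute mult_eq_0_iff)
  then show False
  proof
    assume z: "z = 0"
    have "(\<tau>*x+1)*(x+\<delta>) > 0"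
    proof (rule mult_pos_pos)
      have "\<tau>*x > \<tau>*(-\<delta>/2)" using xg assms(3) by (intro mult_strict_left_mono) auto
      then show "\<tau>*x+1 > 0" using assms(5) by (simp add: field_simps)
      show "x + \<delta> > 0" using xg assms(4) by simp
    qed
    then have "\<tau>*x^2 + b*x + \<delta> > 0" unfolding b_def by (simp add: algebra_simps power2_eq_square)
    moreover have "y^2 \<ge> 0" by simp
    moreover have "-(y^2) = \<tau>*x^2 + b*x + \<delta>" using R z by simp
    ultimately show False by linarith
  next
    assume h: "2*\<tau>*x + b = 0"
    then have "\<tau>*(2*x + \<delta>) = -1" unfolding b_def by (simp add: algebra_simps)
    moreover have "\<tau>*(2*x+\<delta>) > 0" using xg assms(3) by simp
    ultimately show False by simp
  qed
qed

lemma re_sq: "(Re s)^2 = (Re (s^2) + cmod (s^2)) / 2"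
proof -
  have "cmod (s^2) = (cmod s)^2" by (simp add: norm_power)
  also have "\<dots> = (Re s)^2 + (Im s)^2" by (simp add: cmod_power2)
  finally show ?thesis by (simp add: power2_eq_square algebra_simps)
qed

lemma roots:
  fixes q p :: complex
  defines "s \<equiv> csqrt (q^2 + 4*p)"
  shows "(q+s)/2 + (q-s)/2 = q" "(q+s)/2 * ((q-s)/2) = -p"
    "Re ((q+s)/2) * Re ((q-s)/2) = ((Re q)^2 - (Re (q^2+4*p) + cmod (q^2+4*p))/2)/4"
proof -
  have ss: "s^2 = q^2 + 4*p" unfolding s_def by simp
  show "(q+s)/2 + (q-s)/2 = q" by (simp add: field_simps)
  show "(q+s)/2 * ((q-s)/2) = -p"
    using ss by (simp add: field_simps power2_eq_square)
  have "Re ((q+s)/2) * Re ((q-s)/2) = ((Re q)^2 - (Re s)^2)/4"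
    by (simp add: power2_eq_square algebra_simps)
  then show "Re ((q+s)/2) * Re ((q-s)/2) = ((Re q)^2 - (Re (q^2+4*p) + cmod (q^2+4*p))/2)/4"
    using re_sq[of s] ss by simp
qed



lemma aux: "\<bar>r\<bar> = r \<Longrightarrow> r = X + 4*Y \<Longrightarrow> ((X::real) - (r + \<bar>r\<bar>)/2)/4 = - Y"
  by (simp add: field_simps)

lemma per_delta:
  fixes \<tau> c \<delta> :: real and lam :: complex
  assumes tp: "0 < \<tau>" and dp: "0 < \<delta>" and td: "\<tau>*\<delta> < 1" and ct: "c^2*\<tau> < 1"
    and rl: "Re lam > - \<delta>/2"
  shows "(\<forall>\<mu>. mat_eigenvalue (A_mat \<tau> c \<delta> lam) \<mu> \<longrightarrow> Re \<mu> \<noteq> 0) \<and>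
           vec.dim (stable_space (A_mat \<tau> c \<delta> lam)) = 1 \<and>
           vec.dim (unstable_space (A_mat \<tau> c \<delta> lam)) = 1"
proof -
  define a where "a = 1 - c^2*\<tau>"
  have ap: "a > 0" using ct a_def by simp
  define P where "P = (\<lambda>l::complex. (of_real \<tau> * l^2 + l * (1 + of_real \<tau> * of_real \<delta>) + of_real \<delta>) / of_real a)"
  define Q where "Q = (\<lambda>l::complex. (- of_real c * ((1 + of_real \<tau> * of_real \<delta>) + 2 * of_real \<tau> * l)) / of_real a)"
  define H where "H = (\<lambda>l. ((Re (Q l))^2 - (Re ((Q l)^2 + 4*P l) + cmod ((Q l)^2 + 4*P l))/2)/4)"
  have ne2: "(of_real a :: complex) \<noteq> 0" using ap by simp
  have Aeq: "A_mat \<tau> c \<delta> lam = vector [vector [0, 1], vector [P lam, Q lam]]"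
  proof -
    have ne: "1 - (complex_of_real c)^2 * complex_of_real \<tau> = of_real a"
      unfolding a_def by simp
    have e1: "1 / of_real a * of_real a = (1::complex)" using ne2 by simp
    have e2: "1 / of_real a * (of_real \<tau> * lam^2 + lam * (1 + of_real \<tau> * of_real \<delta>) + of_real \<delta>) = P lam"
      unfolding P_def by simp
    have e3: "1 / of_real a * (- of_real c * ((1 + of_real \<tau> * of_real \<delta>) + 2 * of_real \<tau> * lam)) = Q lam"
      unfolding Q_def by simp
    show ?thesis unfolding A_mat_def Let_def ne e1 e2 e3 ..
  qed
  have nz: "Re m \<noteq> 0" if "Re l > -\<delta>/2" "m^2 = Q l * m + P l" for l m
  proof
    assume r: "Re m = 0"
    have aQ: "of_real a * Q l = - of_real c * ((1 + of_real \<tau> * of_real \<delta>) + 2 * of_real \<tau> * l)"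
      using ne2 unfolding Q_def by simp
    have aP: "of_real a * P l = of_real \<tau> * l^2 + l * (1 + of_real \<tau> * of_real \<delta>) + of_real \<delta>"
      using ne2 unfolding P_def by simp
    have "of_real a * m^2 = (of_real a * Q l) * m + of_real a * P l" using that(2) by (simp add: distrib_left)
    then have "of_real a * m^2 = - of_real c * ((1 + of_real \<tau> * of_real \<delta>) + 2 * of_real \<tau> * l) * m + (of_real \<tau> * l^2 + l * (1 + of_real \<tau> * of_real \<delta>) + of_real \<delta>)"
      unfolding aQ aP .
    then have "of_real (1 - c^2*\<tau>) * m^2 + of_real c * (of_real (1+\<tau>*\<delta>) + 2 * of_real \<tau> * l) * m
              - (of_real \<tau> * l^2 + of_real (1+\<tau>*\<delta>) * l + of_real \<delta>) = 0"
      unfolding a_def[symmetric] by (simp add: algebra_simps)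
    then show False using noimag[OF _ r tp dp _ that(1)] td by simp
  qed
  have Hrel: "Re ((Q l + csqrt ((Q l)^2 + 4*P l))/2) * Re ((Q l - csqrt ((Q l)^2 + 4*P l))/2) = H l" for l
    unfolding H_def using roots(3) by simp
  have rootsok: "m^2 = Q l * m + P l"
    if "m = (Q l + csqrt ((Q l)^2 + 4*P l))/2 \<or> m = (Q l - csqrt ((Q l)^2 + 4*P l))/2" for l m
  proof -
    define m1 where "m1 = (Q l + csqrt ((Q l)^2 + 4*P l))/2"
    define m2 where "m2 = (Q l - csqrt ((Q l)^2 + 4*P l))/2"
    have s: "m1 + m2 = Q l" "m1 * m2 = - P l" unfolding m1_def m2_def using roots by auto
    have "m^2 - Q l * m - P l = (m - m1) * (m - m2)"
      by (simp add: power2_eq_square algebra_simps flip: s)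
    moreover have "m = m1 \<or> m = m2" using that unfolding m1_def m2_def by blast
    then have "(m - m1) * (m - m2) = 0" by auto
    ultimately have "m^2 - Q l * m - P l = 0" by simp
    then show ?thesis by (simp add: algebra_simps diff_eq_eq)
  qed
  have Hnz: "H l \<noteq> 0" if "Re l > -\<delta>/2" for l
  proof -
    define m1 where "m1 = (Q l + csqrt ((Q l)^2 + 4*P l))/2"
    define m2 where "m2 = (Q l - csqrt ((Q l)^2 + 4*P l))/2"
    have r1: "m1^2 = Q l * m1 + P l" using rootsok[of m1 l] unfolding m1_def by blast
    have r2: "m2^2 = Q l * m2 + P l" using rootsok[of m2 l] unfolding m2_def by blast
    have "Re m1 \<noteq> 0" by (rule nz[OF that r1])
    moreover have "Re m2 \<noteq> 0" by (rule nz[OF that r2])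
    moreover have "Re m1 * Re m2 = H l" using Hrel[of l] unfolding m1_def m2_def .
    ultimately show ?thesis by (metis no_zero_divisors)
  qed
  have H0: "H 0 < 0"
  proof -
    have q0: "Q 0 = of_real (- c*(1+\<tau>*\<delta>)/a)" unfolding Q_def by simp
    have p0: "P 0 = of_real (\<delta>/a)" unfolding P_def by simp
    have pos: "(- c*(1+\<tau>*\<delta>)/a)^2 + 4*(\<delta>/a) > 0" using dp ap
      by (smt (verit) divide_pos_pos zero_le_power2)
    define r where "r = (- c*(1+\<tau>*\<delta>)/a)^2 + 4*(\<delta>/a)"
    have D: "(Q 0)^2 + 4 * P 0 = of_real r"
      unfolding q0 p0 r_def by simp
    have "H 0 = ((- c*(1+\<tau>*\<delta>)/a)^2 - (r + \<bar>r\<bar>)/2) / 4"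
      unfolding H_def D by (simp only: q0 Re_complex_of_real norm_of_real)
    also have "\<dots> = - (\<delta>/a)"
    proof -
      have "\<bar>r\<bar> = r" using pos unfolding r_def by simp
      moreover have "r = (- c*(1+\<tau>*\<delta>)/a)^2 + 4*(\<delta>/a)" by (rule r_def)
      ultimately show ?thesis by (rule aux)
    qed
    finally show ?thesis using dp ap by simp
  qed
  have cont: "continuous_on {0..1} (\<lambda>t::real. H (of_real t * lam))"
  proof -
    have cP: "continuous_on UNIV P" unfolding P_def using ne2 by (intro continuous_intros) auto
    have cQ: "continuous_on UNIV Q" unfolding Q_def using ne2 by (intro continuous_intros) auto
    have l: "continuous_on {0..1} (\<lambda>t::real. of_real t * lam)" by (intro continuous_intros)
    have q: "continuous_on {0..1} (\<lambda>t::real. Q (of_real t * lam))"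
      using continuous_on_compose2[OF cQ l] by simp
    have p: "continuous_on {0..1} (\<lambda>t::real. P (of_real t * lam))"
      using continuous_on_compose2[OF cP l] by simp
    show ?thesis unfolding H_def by (intro continuous_intros q p) auto
  qed
  have Hl: "H lam < 0"
  proof (rule ccontr)
    assume "\<not> H lam < 0"
    then have "H (of_real 1 * lam) \<ge> 0" by simp
    then obtain t where t: "t \<in> {0..1}" "H (of_real t * lam) = 0"
      using IVT'[of "\<lambda>t. H (of_real t * lam)" 0 0 1] H0 cont by auto
    have "Re (of_real t * lam) > -\<delta>/2"
    proof (cases "Re lam \<ge> 0")
      case True
      have "t * Re lam \<ge> 0" using t(1) True by simp
      then show ?thesis using dp by simp
    next
      case False
      have "t * Re lam \<ge> 1 * Re lam" using t(1) False by (intro mult_right_mono_neg) auto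
      then show ?thesis using rl by simp
    qed
    then show False using Hnz t(2) by blast
  qed
  define m1 where "m1 = (Q lam + csqrt ((Q lam)^2 + 4*P lam))/2"
  define m2 where "m2 = (Q lam - csqrt ((Q lam)^2 + 4*P lam))/2"
  have s: "m1 + m2 = Q lam" "m1 * m2 = - P lam" unfolding m1_def m2_def using roots by auto
  have neg: "Re m1 * Re m2 < 0" using Hrel[of lam] Hl unfolding m1_def m2_def by simp
  show ?thesis
  proof (cases "Re m1 < 0")
    case True
    then have "Re m2 > 0" using neg by (simp add: mult_less_0_iff)
    then show ?thesis unfolding Aeq using dims[OF s True] by simp
  next
    case False
    then have "Re m1 > 0" "Re m2 < 0" using neg by (auto simp add: mult_less_0_iff)
    moreover have "m2 + m1 = Q lam" "m2 * m1 = - P lam" using s by (simp_all add: ac_simps)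
    ultimately show ?thesis unfolding Aeq using dims by blast
  qed
qed



theorem lemma3p13:
  fixes f :: "real \<Rightarrow> real" and \<tau> c :: real and U V :: "real \<Rightarrow> real" and lam :: complex
  assumes "smooth_fun f" and "bistable f"
    and "0 < \<tau>" and "\<tau> < tau_m f"
    and "traveling_wave f \<tau> c U V"
    and "c^2 * \<tau> < 1"
    and "Re lam > - chi0 f"
  shows "\<forall>\<delta> \<in> {- deriv f 1, - deriv f 0}.
           (\<forall>\<mu>. mat_eigenvalue (A_mat \<tau> c \<delta> lam) \<mu> \<longrightarrow> Re \<mu> \<noteq> 0) \<and>
           vec.dim (stable_space (A_mat \<tau> c \<delta> lam)) = 1 \<and>
           vec.dim (unstable_space (A_mat \<tau> c \<delta> lam)) = 1"
proof
  fix \<delta> assume d: "\<delta> \<in> {- deriv f 1, - deriv f 0}"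
  have d01: "deriv f 0 < 0" "deriv f 1 < 0" using assms(2) unfolding bistable_def by auto
  have dp: "\<delta> > 0" using d d01 by auto
  have rl: "Re lam > - \<delta>/2" using assms(7) d unfolding chi0_def by auto
  have cont: "continuous_on {0..1} (\<lambda>x. \<bar>deriv f x\<bar>)"
  proof -
    have "\<forall>x. deriv f differentiable (at x)"
    proof
      fix x
      have "((deriv ^^ Suc 0) f) differentiable (at x)" using assms(1) unfolding smooth_fun_def by blast
      then show "deriv f differentiable (at x)" by simp
    qed
    then have "continuous_on UNIV (deriv f)"
      by (simp add: continuous_at_imp_continuous_on differentiable_imp_continuous_within)
    then show ?thesis by (intro continuous_intros) (auto intro: continuous_on_subset)
  qed
  have bdd: "bdd_above ((\<lambda>x. \<bar>deriv f x\<bar>) ` {0..1})"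
    by (intro bounded_imp_bdd_above compact_imp_bounded compact_continuous_image cont) auto
  define S where "S = (SUP x\<in>{0..1}. \<bar>deriv f x\<bar>)"
  have dS: "\<delta> \<le> S"
  proof -
    have "\<bar>deriv f 1\<bar> \<le> S" "\<bar>deriv f 0\<bar> \<le> S" unfolding S_def
      using bdd by (auto intro!: cSUP_upper)
    then show ?thesis using d by auto
  qed
  have Sp: "S > 0" using dS dp by simp
  have "\<tau> < 1 / S" using assms(4) unfolding tau_m_def S_def by simp
  then have "\<tau> * S < 1" using Sp by (simp add: field_simps)
  moreover have "\<tau> * \<delta> \<le> \<tau> * S" using dS assms(3) by simp
  ultimately have td: "\<tau> * \<delta> < 1" by simp
  show "(\<forall>\<mu>. mat_eigenvalue (A_mat \<tau> c \<delta> lam) \<mu> \<longrightarrow> Re \<mu> \<noteq> 0) \<and>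
           vec.dim (stable_space (A_mat \<tau> c \<delta> lam)) = 1 \<and>
           vec.dim (unstable_space (A_mat \<tau> c \<delta> lam)) = 1"
    by (rule per_delta[OF assms(3) dp td assms(6) rl])
qed

end
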